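(* $\mathrm{1RFA}/n\neq\mathrm{1RFA}/Rn$.
   Context: A 1rfa is a one-way deterministic finite automaton satisfying the reversibility condition (for every state $q$ and tape symbol $\sigma$ at most one $q'$ with $\delta(q',\sigma)=q$). For equal-length strings $x,y$, $\genfrac{[}{]}{0pt}{}{x}{y}$ is the two-track string with $x$ on the upper track and $y$ on the lower track. $\mathrm{1RFA}/n$ is the family of languages $L$ for which there exist a 1rfa $M$ and a (deterministic) advice function $h:\mathbb{N}\to\Gamma^*$ with $|h(n)|=n$ such that $M(\genfrac{[}{]}{0pt}{}{x}{h(|x|)})=L(x)$ for all $x$. $\mathrm{1RFA}/Rn$ is defined analogously with randomized advice: a probability ensemble $\{D_n\}$, $D_n$ a distribution on $\Gamma^n$, such that $M$ on $\genfrac{[}{]}{0pt}{}{x}{y}$ with $y\sim D_n$ outputs $L(x)$ with probability at least $1-\varepsilon$ for a constant $\varepsilon\in[0,1/2)$. *)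

theory Defs
  imports "HOL-Probability.Probability"
begin

text \<open>Tape symbols of a 1rfa reading a two-track input: left endmarker, right
endmarker, and two-track symbols (upper track symbol, lower/advice track symbol).\<close>

datatype tsym = Cent | Dollar | Trk "nat \<times> nat"

definition tape_syms :: "nat set \<Rightarrow> nat set \<Rightarrow> tsym set" where
  "tape_syms Sg Gm = {Cent, Dollar} \<union> Trk ` (Sg \<times> Gm)"

definition is_1rfa ::
  "nat set \<Rightarrow> nat set \<Rightarrow> nat set \<Rightarrow> (nat \<Rightarrow> tsym \<Rightarrow> nat) \<Rightarrow> nat \<Rightarrow> nat set \<Rightarrow> bool" where
  "is_1rfa Sg Gm Q delta q0 F \<longleftrightarrow>
     finite Q \<and> q0 \<in> Q \<and> F \<subseteq> Q \<and>
     (\<forall>q\<in>Q. \<forall>s\<in>tape_syms Sg Gm. delta q s \<in> Q) \<and>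
     (\<forall>q\<in>Q. \<forall>s\<in>tape_syms Sg Gm. \<forall>q1\<in>Q. \<forall>q2\<in>Q.
        delta q1 s = q \<and> delta q2 s = q \<longrightarrow> q1 = q2)"

definition rfa_accepts ::
  "(nat \<Rightarrow> tsym \<Rightarrow> nat) \<Rightarrow> nat \<Rightarrow> nat set \<Rightarrow> nat list \<Rightarrow> nat list \<Rightarrow> bool" where
  "rfa_accepts delta q0 F x y \<longleftrightarrow>
     fold (\<lambda>s q. delta q s) ([Cent] @ map Trk (zip x y) @ [Dollar]) q0 \<in> F"

text \<open>Languages are pairs (alphabet, language over that alphabet).\<close>

definition RFA_adv :: "(nat set \<times> nat list set) set" where
  "RFA_adv = {(Sg, L). finite Sg \<and> Sg \<noteq> {} \<and> L \<subseteq> lists Sg \<and>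
     (\<exists>Gm Q delta q0 F h. finite Gm \<and> is_1rfa Sg Gm Q delta q0 F \<and>
        (\<forall>n. length (h n) = n \<and> set (h n) \<subseteq> Gm) \<and>
        (\<forall>x\<in>lists Sg. rfa_accepts delta q0 F x (h (length x)) \<longleftrightarrow> x \<in> L))}"

definition RFA_radv :: "(nat set \<times> nat list set) set" where
  "RFA_radv = {(Sg, L). finite Sg \<and> Sg \<noteq> {} \<and> L \<subseteq> lists Sg \<and>
     (\<exists>Gm Q delta q0 F (D :: nat \<Rightarrow> nat list pmf) (eps :: real).
        finite Gm \<and> is_1rfa Sg Gm Q delta q0 F \<and>
        0 \<le> eps \<and> eps < 1/2 \<and>
        (\<forall>n. \<forall>y\<in>set_pmf (D n). length y = n \<and> set y \<subseteq> Gm) \<and>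
        (\<forall>x\<in>lists Sg.
           measure_pmf.prob (D (length x))
             {y. rfa_accepts delta q0 F x y \<longleftrightarrow> x \<in> L} \<ge> 1 - eps))}"

end

theory Submission
  imports Defs
begin

definition Sg0 :: "nat set" where "Sg0 = {0,1}"
definition L0 :: "nat list set" where "L0 = {x. x \<in> lists Sg0 \<and> 1 \<in> set x}"

lemma rfa_clo: "is_1rfa Sg Gm Q delta q0 F \<Longrightarrow> \<forall>q\<in>Q. \<forall>s\<in>tape_syms Sg Gm. delta q s \<in> Q"
  unfolding is_1rfa_def by (elim conjE)

lemma rfa_fin: "is_1rfa Sg Gm Q delta q0 F \<Longrightarrow> finite Q \<and> q0 \<in> Q"
  unfolding is_1rfa_def by (elim conjE) (intro conjI)

lemma fold_in_Q:
  assumes "is_1rfa Sg Gm Q delta q0 F"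
  shows "q \<in> Q \<Longrightarrow> set ws \<subseteq> tape_syms Sg Gm \<Longrightarrow> fold (\<lambda>s q. delta q s) ws q \<in> Q"
proof (induction ws arbitrary: q)
  case Nil then show ?case by simp
next
  case (Cons a ws)
  have "delta q a \<in> Q" using rfa_clo[OF assms] Cons.prems by simp
  then show ?case using Cons by simp
qed

lemma zip_take_len: "zip xs (take (length xs) ys) = zip xs ys"
proof (induction xs arbitrary: ys)
  case Nil then show ?case by simp
next
  case (Cons a xs) then show ?case by (cases ys) auto
qed

lemma not_adv:
  assumes rfa: "is_1rfa Sg0 Gm Q delta q0 F"
    and hlen: "\<And>n. length (h n) = n \<and> set (h n) \<subseteq> Gm"
    and acc: "\<forall>x\<in>lists Sg0. rfa_accepts delta q0 F x (h (length x)) \<longleftrightarrow> x \<in> L0"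
  shows False
proof -
  define n where "n = Suc (card Q)"
  define y where "y = h n"
  have ylen: "length y = n" and yG: "set y \<subseteq> Gm" using hlen y_def by auto
  define T where "T = (\<lambda>s q. delta q s)"
  define st where "st u = fold T (Cent # map Trk (zip u y)) q0" for u
  have fQ: "finite Q" "q0 \<in> Q" using rfa_fin[OF rfa] by auto
  have st_app: "st (u @ v) = fold T (map Trk (zip v (drop (length u) y))) (st u)"
    if "length u \<le> n" for u v
    unfolding st_def using that ylen by (simp add: zip_append1 zip_take_len)
  have st_snoc: "st (u @ [a]) = delta (st u) (Trk (a, y ! length u))"
    if "length u < n" for u a
  proof -
    have d: "drop (length u) y = y ! length u # drop (Suc (length u)) y"
      using that ylen by (simp add: Cons_nth_drop_Suc)
    show ?thesis using st_app[of u "[a]"] that by (simp only: d) (simp add: T_def)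
  qed
  have st_Q: "st u \<in> Q" if "u \<in> lists Sg0" "length u \<le> n" for u
  proof -
    have "set (Cent # map Trk (zip u y)) \<subseteq> tape_syms Sg0 Gm"
      using that yG by (auto simp: tape_syms_def dest: set_zip_leftD set_zip_rightD)
    then show ?thesis unfolding st_def T_def by (rule fold_in_Q[OF rfa fQ(2)])
  qed
  have acc_iff: "rfa_accepts delta q0 F x y \<longleftrightarrow> delta (st x) Dollar \<in> F" for x
    by (simp add: rfa_accepts_def st_def T_def)
  define Z where "Z k = replicate k (0::nat)" for k
  have ZL: "Z k \<in> lists Sg0" for k by (auto simp: Z_def Sg0_def)
  define A where "A k = st ` {u. u \<in> lists Sg0 \<and> length u = k \<and> 1 \<in> set u}" for k
  have notin: "st (Z k) \<notin> A k" if "k \<le> n" for k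
  proof
    assume "st (Z k) \<in> A k"
    then obtain u where u0: "u \<in> {u. u \<in> lists Sg0 \<and> length u = k \<and> 1 \<in> set u}"
      and u4: "st (Z k) = st u"
      unfolding A_def by (rule imageE)
    have u: "u \<in> lists Sg0" "length u = k" "1 \<in> set u" "st u = st (Z k)"
      using u0 u4 by auto
    define w where "w = u @ Z (n - k)"
    have "st w = st (Z k @ Z (n-k))"
      using st_app[of u "Z (n-k)"] st_app[of "Z k" "Z (n-k)"] u that
      by (simp add: w_def Z_def)
    moreover have "Z k @ Z (n-k) = Z n" using that by (simp add: Z_def replicate_add[symmetric])
    moreover have "w \<in> lists Sg0" "length w = n" "w \<in> L0"
      using u ZL that by (auto simp: w_def L0_def Z_def)
    moreover have "length (Z n) = n" "Z n \<notin> L0" by (auto simp: Z_def L0_def)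
    ultimately have sw: "st w = st (Z n)" and wL: "w \<in> lists Sg0" "length w = n" "w \<in> L0"
      and zl: "length (Z n) = n" "Z n \<notin> L0" by simp_all
    have "rfa_accepts delta q0 F w y" using acc wL y_def by auto
    then have "rfa_accepts delta q0 F (Z n) y" using acc_iff sw by simp
    then have "Z n \<in> L0" using acc ZL[of n] zl y_def by auto
    then show False using zl by simp
  qed
  have card_A: "k \<le> card (A k)" if "k \<le> n" for k
    using that
  proof (induction k)
    case 0 show ?case by simp
  next
    case (Suc k)
    have kn: "k < n" using Suc.prems by simp
    define r where "r q = delta q (Trk (1, y ! k))" for q
    have "y ! k \<in> Gm" using kn ylen yG nth_mem by fastforce
    then have sym: "Trk (1, y!k) \<in> tape_syms Sg0 Gm" by (auto simp: tape_syms_def Sg0_def)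
    have inj: "inj_on r Q"
    proof (rule inj_onI)
      fix a b assume ab: "a \<in> Q" "b \<in> Q" "r a = r b"
      have clo: "\<forall>q\<in>Q. \<forall>s\<in>tape_syms Sg0 Gm. delta q s \<in> Q"
        using rfa_clo[OF rfa] .
      have rev: "\<forall>q\<in>Q. \<forall>s\<in>tape_syms Sg0 Gm. \<forall>q1\<in>Q. \<forall>q2\<in>Q.
        delta q1 s = q \<and> delta q2 s = q \<longrightarrow> q1 = q2"
        using rfa unfolding is_1rfa_def by (elim conjE)
      have raQ: "r a \<in> Q" unfolding r_def by (rule clo[rule_format, OF ab(1) sym])
      show "a = b"
        by (rule rev[rule_format, OF raQ sym ab(1) ab(2)]) (use ab(3) in \<open>simp add: r_def\<close>)
    qed
    have AQ: "A k \<subseteq> Q" unfolding A_def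
      by (rule image_subsetI, rule st_Q) (use kn in auto)
    have ZQ: "st (Z k) \<in> Q" using st_Q kn ZL by (simp add: Z_def)
    have AQ': "A (Suc k) \<subseteq> Q" unfolding A_def
      by (rule image_subsetI, rule st_Q) (use Suc.prems in auto)
    have sub: "r ` (insert (st (Z k)) (A k)) \<subseteq> A (Suc k)"
    proof
      fix q assume "q \<in> r ` (insert (st (Z k)) (A k))"
      then obtain p where p: "p \<in> insert (st (Z k)) (A k)" "q = r p" by blast
      have "\<exists>u. u \<in> lists Sg0 \<and> length u = k \<and> p = st u"
      proof (cases "p = st (Z k)")
        case True then show ?thesis using ZL[of k] by (intro exI[of _ "Z k"]) (simp add: Z_def)
      next
        case False then have "p \<in> A k" using p(1) by simp
        then show ?thesis unfolding A_def by blast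
      qed
      then obtain u where u: "u \<in> lists Sg0" "length u = k" "q = r (st u)"
        using p(2) by blast
      then have "q = st (u @ [1])" using st_snoc[of u 1] kn by (simp add: r_def)
      moreover have "u @ [1] \<in> lists Sg0" using u by (simp add: Sg0_def)
      ultimately show "q \<in> A (Suc k)" using u by (auto simp: A_def)
    qed
    have "card (insert (st (Z k)) (A k)) = Suc (card (A k))"
      using notin[of k] kn AQ fQ by (simp add: finite_subset)
    moreover have "card (r ` insert (st (Z k)) (A k)) = card (insert (st (Z k)) (A k))"
    proof (rule card_image, rule inj_on_subset[OF inj])
      show "insert (st (Z k)) (A k) \<subseteq> Q" using AQ ZQ by blast
    qed
    moreover have "card (r ` insert (st (Z k)) (A k)) \<le> card (A (Suc k))"
      using sub AQ' fQ by (meson card_mono finite_subset)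
    ultimately show ?case using Suc.IH kn by simp
  qed
  have "n \<le> card (A n)" using card_A by simp
  moreover have "A n \<subseteq> Q" using st_Q by (auto simp: A_def)
  ultimately have "n \<le> card Q" using card_mono[OF fQ(1)] by (meson le_trans)
  then show False by (simp add: n_def)
qed

lemma not_in_adv: "(Sg0, L0) \<notin> RFA_adv"
  unfolding RFA_adv_def using not_adv by blast

definition U3 :: "nat pmf" where "U3 = pmf_of_set {0,1,2}"

fun Dn :: "nat \<Rightarrow> nat list pmf" where
  "Dn 0 = return_pmf []"
| "Dn (Suc n) = bind_pmf U3 (\<lambda>b. map_pmf (\<lambda>ys. b # ys) (Dn n))"

fun ip :: "nat list \<Rightarrow> nat list \<Rightarrow> nat" where
  "ip (a#xs) (b#ys) = a*b + ip xs ys" | "ip _ _ = 0"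

definition dl :: "nat \<Rightarrow> tsym \<Rightarrow> nat" where
  "dl q s = (case s of Trk p \<Rightarrow> (q + fst p * snd p) mod 3 | _ \<Rightarrow> q)"

lemma fold_dl: "q < 3 \<Longrightarrow> fold (\<lambda>s q. dl q s) (map Trk (zip x y)) q = (q + ip x y) mod 3"
proof (induction x arbitrary: y q)
  case Nil then show ?case by simp
next
  case (Cons a x)
  show ?case
  proof (cases y)
    case Nil then show ?thesis using Cons by simp
  next
    case (Cons b y')
    then show ?thesis using Cons.IH[of "(q + a*b) mod 3" y']
      by (simp add: dl_def mod_add_left_eq add.assoc)
  qed
qed

lemma Dn_set: "\<forall>y\<in>set_pmf (Dn n). length y = n \<and> set y \<subseteq> {0,1,2}"
  by (induction n) (force simp: U3_def)+

lemma shift: "map_pmf (\<lambda>b. (b + r) mod 3) U3 = U3"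
proof -
  have m: "(b + r) mod 3 = (b + r mod 3) mod 3" for b by (simp add: mod_add_right_eq)
  have "r mod 3 < 3" by simp
  then have c: "r mod 3 = 0 \<or> r mod 3 = 1 \<or> r mod 3 = 2" by linarith
  have img: "(\<lambda>b. (b + r) mod 3) ` {0,1,2} = {0,1,2::nat}"
    using c by (simp only: m) (auto simp: insert_commute)
  have inj: "inj_on (\<lambda>b. (b + r) mod 3) {0,1,2::nat}"
    using c by (simp only: m) (auto simp: inj_on_def)
  show ?thesis unfolding U3_def using map_pmf_of_set_inj[OF inj] img by simp
qed

lemma R_uniform:
  "x \<in> lists {0,1} \<Longrightarrow> 1 \<in> set x \<Longrightarrow> map_pmf (\<lambda>y. ip x y mod 3) (Dn (length x)) = U3"
proof (induction x)
  case Nil then show ?case by simp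
next
  case (Cons a x)
  have eq: "map_pmf (\<lambda>y. ip (a#x) y mod 3) (Dn (length (a#x)))
     = bind_pmf U3 (\<lambda>b. map_pmf (\<lambda>ys. (a*b + ip x ys) mod 3) (Dn (length x)))"
    by (simp add: map_bind_pmf map_pmf_comp)
  show ?case
  proof (cases "a = 1")
    case True
    have "bind_pmf U3 (\<lambda>b. map_pmf (\<lambda>ys. (a*b + ip x ys) mod 3) (Dn (length x)))
      = bind_pmf (Dn (length x)) (\<lambda>ys. map_pmf (\<lambda>b. (b + ip x ys) mod 3) U3)"
      unfolding map_pmf_def using True by (subst bind_commute_pmf) simp
    also have "\<dots> = U3" by (simp add: shift)
    finally show ?thesis using eq by simp
  next
    case False
    then have "a = 0" "1 \<in> set x" "x \<in> lists {0,1}" using Cons.prems by auto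
    then show ?thesis using eq Cons.IH by simp
  qed
qed

lemma ip_zero: "set x \<subseteq> {0} \<Longrightarrow> ip x y = 0"
  by (induction x y rule: ip.induct) auto

lemma mod3_inj: "(q1::nat) < 3 \<Longrightarrow> q2 < 3 \<Longrightarrow> (q1 + k) mod 3 = (q2 + k) mod 3 \<Longrightarrow> q1 = q2"
  by presburger

lemma radv_gen:
  fixes Sg0 :: "nat set" and L0 :: "nat list set" and dl :: "nat \<Rightarrow> tsym \<Rightarrow> nat" and Dn :: "nat \<Rightarrow> nat list pmf"
  assumes rfa: "is_1rfa Sg0 {0,1,2} {0,1,2} dl 0 {1,2}"
  and Dn_set: "\<And>n. \<forall>y\<in>set_pmf (Dn n). length y = n \<and> set y \<subseteq> {0,1,2}"
  and prob: "\<And>x. x \<in> lists Sg0 \<Longrightarrow> measure_pmf.prob (Dn (length x))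
      {y. rfa_accepts dl 0 {1,2} x y \<longleftrightarrow> x \<in> L0} \<ge> 1 - 1/3"
  and b: "finite Sg0" "Sg0 \<noteq> {}" "L0 \<subseteq> lists Sg0"
  shows "(Sg0, L0) \<in> RFA_radv"
  unfolding RFA_radv_def mem_Collect_eq case_prod_conv
    apply (rule conjI, rule b)
    apply (rule conjI, rule b)
    apply (rule conjI, rule b)
    apply (rule exI[of _ "{0,1,2}"], rule exI[of _ "{0,1,2}"], rule exI[of _ dl], rule exI[of _ 0],
           rule exI[of _ "{1,2}"], rule exI[of _ Dn], rule exI[of _ "1/3::real"])
  apply (rule conjI, simp)
  apply (rule conjI, rule rfa)
  apply (rule conjI, simp)
  apply (rule conjI, simp)
  apply (rule conjI, rule allI, rule Dn_set)
  apply (rule ballI)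
  apply (erule prob)
  done

lemma in_radv: "(Sg0, L0) \<in> RFA_radv"
proof -
  have rfa: "is_1rfa Sg0 {0,1,2} {0,1,2} dl 0 {1,2}"
    unfolding is_1rfa_def
  proof (intro conjI ballI impI)
    fix q s assume q: "q \<in> {0,1,2::nat}" "s \<in> tape_syms Sg0 {0,1,2}"
    from q have "q < 3" by auto
    then have "dl q s < 3" by (simp add: dl_def split: tsym.splits)
    then show "dl q s \<in> {0,1,2}" by auto
  next
    fix q s q1 q2 assume a: "q \<in> {0,1,2::nat}" "s \<in> tape_syms Sg0 {0,1,2}"
      "q1 \<in> {0,1,2::nat}" "q2 \<in> {0,1,2::nat}" "dl q1 s = q \<and> dl q2 s = q"
    then have h: "q1 < 3" "q2 < 3" "dl q1 s = dl q2 s" by auto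
    show "q1 = q2"
    proof (cases s)
      case (Trk p) then show ?thesis using h mod3_inj[of q1 q2 "fst p * snd p"] by (simp add: dl_def)
    qed (use h in \<open>simp_all add: dl_def\<close>)
  qed auto
  have acc: "rfa_accepts dl 0 {1,2} x y \<longleftrightarrow> ip x y mod 3 \<in> {1,2}" for x y
  proof -
    have "dl 0 Cent = 0" "\<And>q. dl q Dollar = q" by (simp_all add: dl_def)
    then show ?thesis by (simp add: rfa_accepts_def fold_dl)
  qed
  have prob: "measure_pmf.prob (Dn (length x))
      {y. rfa_accepts dl 0 {1,2} x y \<longleftrightarrow> x \<in> L0} \<ge> 1 - 1/3" if x: "x \<in> lists Sg0" for x
  proof (cases "1 \<in> set x")
    case True
    then have "{y. rfa_accepts dl 0 {1,2} x y \<longleftrightarrow> x \<in> L0} = (\<lambda>y. ip x y mod 3) -` {1,2}"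
      using x by (auto simp: acc[simplified] L0_def)
    moreover have "measure_pmf.prob (Dn (length x)) ((\<lambda>y. ip x y mod 3) -` {1,2}) = 2/3"
    proof -
      have "measure_pmf.prob (Dn (length x)) ((\<lambda>y. ip x y mod 3) -` {1,2})
        = measure_pmf.prob (map_pmf (\<lambda>y. ip x y mod 3) (Dn (length x))) {1,2}" by simp
      also have "\<dots> = measure_pmf.prob U3 {1,2}"
        using R_uniform[of x] True x by (simp add: Sg0_def)
      also have "\<dots> = 2/3" unfolding U3_def by (subst measure_pmf_of_set) auto
      finally show ?thesis .
    qed
    ultimately show ?thesis by simp
  next
    case False
    then have "set x \<subseteq> {0}" using x by (auto simp: Sg0_def)
    then have "{y. rfa_accepts dl 0 {1,2} x y \<longleftrightarrow> x \<in> L0} = UNIV"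
      using False by (auto simp: acc[simplified] L0_def ip_zero)
    then show ?thesis by simp
  qed
  have e: "0 \<le> (1/3::real)" "(1/3::real) < 1/2" "finite {0,1,2::nat}" by simp_all
  have b: "finite Sg0" "Sg0 \<noteq> {}" "L0 \<subseteq> lists Sg0" by (auto simp: Sg0_def L0_def)
  show ?thesis by (rule radv_gen[OF rfa Dn_set prob b])
qed

theorem corollary4p4:
  shows "RFA_adv \<noteq> RFA_radv"
proof
  assume "RFA_adv = RFA_radv"
  then show False using not_in_adv in_radv by simp
qed

end
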